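(* Let a nondegenerate triangle with circumradius $R$ be circumscribed about a central conic one of whose foci coincides with the circumcenter of the triangle, and let $a$ be the semi-major axis of the conic (half the distance between its vertices on the focal axis). Then $R=2a$.
   Context: A central conic is a non-degenerate ellipse or hyperbola. A triangle is circumscribed about a conic if each of its three sidelines is tangent to the conic. *)

theory Defs
  imports "HOL-Analysis.Analysis"
begin

text \<open>Points of the Euclidean plane are modelled as complex numbers.\<close>

definition line_through :: "complex \<Rightarrow> complex \<Rightarrow> complex set" where
  "line_through P Q = {P + of_real t * (Q - P) | t. True}"

text \<open>Non-degenerate ellipse with foci F1, F2 and semi-major axis a
  (the circle, F1 = F2, is included).\<close>
definition is_ellipse :: "complex set \<Rightarrow> complex \<Rightarrow> complex \<Rightarrow> real \<Rightarrow> bool" where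
  "is_ellipse K F1 F2 a \<longleftrightarrow> 0 < a \<and> dist F1 F2 < 2 * a \<and>
     K = {P. dist P F1 + dist P F2 = 2 * a}"

definition is_hyperbola :: "complex set \<Rightarrow> complex \<Rightarrow> complex \<Rightarrow> real \<Rightarrow> bool" where
  "is_hyperbola K F1 F2 a \<longleftrightarrow> 0 < a \<and> 2 * a < dist F1 F2 \<and>
     K = {P. \<bar>dist P F1 - dist P F2\<bar> = 2 * a}"

text \<open>A line L is tangent to a curve K if at some point X of L \<inter> K the curve is,
  locally around X, the zero set of a function differentiable at X with nonzero
  derivative, and L is the line through X in the direction annihilated by that
  derivative (the usual tangent line of a regular curve).\<close>
definition tangent_line :: "complex set \<Rightarrow> complex set \<Rightarrow> bool" where
  "tangent_line L K \<longleftrightarrow>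
     (\<exists>X U g g' d. X \<in> L \<and> X \<in> K \<and> open U \<and> X \<in> U \<and>
        (g has_derivative g') (at X) \<and> g' \<noteq> (\<lambda>_. 0) \<and>
        K \<inter> U = {P \<in> U. g P = (0::real)} \<and>
        d \<noteq> 0 \<and> g' d = 0 \<and> L = {X + of_real t * d | t. True})"

end

theory Submission
  imports Defs
begin


lemma transversal:
  fixes f g :: "complex \<Rightarrow> real"
  assumes XU: "X \<in> U" and oU: "open U" and gd: "(g has_derivative g') (at X)"
    and g'nz: "g' \<noteq> (\<lambda>_. 0)" and KU: "K \<inter> U = {P \<in> U. g P = 0}"
    and dnz: "d \<noteq> 0" and g'd: "g' d = 0"
    and fd: "(f has_derivative f') (at X)" and fX: "f X = 0"
    and fc: "continuous_on UNIV f" and fK: "{P. f P = 0} \<subseteq> K"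
  shows "f' d = 0"
proof (rule ccontr)
  assume anz: "f' d \<noteq> 0"
  define \<alpha> where "\<alpha> = f' d"
  have lf: "linear f'" using fd has_derivative_linear by blast
  have lg: "linear g'" using gd has_derivative_linear by blast
  define e where "e = f' (\<i> * d) *\<^sub>R d - \<alpha> *\<^sub>R (\<i> * d)"
  have fe: "f' e = 0" unfolding e_def \<alpha>_def
    by (simp add: linear_diff[OF lf] linear_scale[OF lf])
  have ge: "g' e = - \<alpha> * g' (\<i> * d)" unfolding e_def
    by (simp add: linear_diff[OF lg] linear_scale[OF lg] g'd)
  have gid: "g' (\<i> * d) \<noteq> 0"
  proof
    assume h: "g' (\<i> * d) = 0"
    have "g' w = 0" for w
    proof -
      have "w = Re (w/d) *\<^sub>R d + Im (w/d) *\<^sub>R (\<i> * d)"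
      proof -
        have "w = (w/d) * d" using dnz by simp
        also have "w/d = complex_of_real (Re (w/d)) + \<i> * complex_of_real (Im (w/d))"
          using complex_eq by blast
        finally show ?thesis by (simp add: scaleR_conv_of_real algebra_simps)
      qed
      then have "g' w = Re (w/d) * g' d + Im (w/d) * g' (\<i> * d)"
        by (metis linear_add[OF lg] linear_scale[OF lg] scaleR_conv_of_real real_scaleR_def)
      thus ?thesis using h g'd by simp
    qed
    thus False using g'nz by auto
  qed
  define \<beta> where "\<beta> = g' e"
  have bnz: "\<beta> \<noteq> 0" unfolding \<beta>_def ge using anz gid \<alpha>_def by simp
  define N where "N = norm e + norm d"
  have Npos: "N > 0" unfolding N_def using dnz by (simp add: add_nonneg_pos)
  obtain \<delta>1 where d1: "\<delta>1 > 0" and h1: "\<And>y. norm (y - X) < \<delta>1 \<Longrightarrow>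
      norm (f y - f X - f' (y - X)) \<le> (\<bar>\<alpha>\<bar> / (2*N)) * norm (y - X)"
    using fd unfolding has_derivative_at_alt using anz \<alpha>_def Npos
    by (metis divide_pos_pos zero_less_abs_iff zero_less_mult_iff zero_less_numeral)
  obtain \<delta>2 where d2: "\<delta>2 > 0" and h2: "\<And>y. norm (y - X) < \<delta>2 \<Longrightarrow>
      norm (g y - g X - g' (y - X)) \<le> (\<bar>\<beta>\<bar> / (2*N)) * norm (y - X)"
    using gd unfolding has_derivative_at_alt using bnz Npos
    by (metis divide_pos_pos zero_less_abs_iff zero_less_mult_iff zero_less_numeral)
  obtain \<delta>3 where d3: "\<delta>3 > 0" and h3: "ball X \<delta>3 \<subseteq> U"
    using oU XU open_contains_ball by blast
  define \<delta> where "\<delta> = min \<delta>1 (min \<delta>2 \<delta>3)"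
  have dpos: "\<delta> > 0" using d1 d2 d3 \<delta>_def by simp
  define \<epsilon> where "\<epsilon> = \<delta> / (2 * N)"
  have epos: "\<epsilon> > 0" using dpos Npos \<epsilon>_def by simp
  have eN: "\<epsilon> * N < \<delta>" using dpos Npos \<epsilon>_def by (simp add: field_simps)
  define h where "h t = \<epsilon> *\<^sub>R e + t *\<^sub>R d" for t
  have nh: "norm (h t) \<le> \<epsilon> * N" if "\<bar>t\<bar> \<le> \<epsilon>" for t
  proof -
    have "norm (h t) \<le> \<epsilon> * norm e + \<bar>t\<bar> * norm d"
      unfolding h_def using norm_triangle_ineq[of "\<epsilon> *\<^sub>R e" "t *\<^sub>R d"] epos by simp
    also have "\<dots> \<le> \<epsilon> * norm e + \<epsilon> * norm d"
      using that by (simp add: mult_right_mono)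
    finally show ?thesis unfolding N_def by (simp add: algebra_simps)
  qed
  have f'h: "f' (h t) = t * \<alpha>" for t
    unfolding h_def \<alpha>_def by (simp add: linear_add[OF lf] linear_scale[OF lf] fe)
  have g'h: "g' (h t) = \<epsilon> * \<beta>" for t
    unfolding h_def \<beta>_def by (simp add: linear_add[OF lg] linear_scale[OF lg] g'd)
  have fapprox: "\<bar>f (X + h t) - t * \<alpha>\<bar> \<le> \<bar>\<alpha>\<bar> * \<epsilon> / 2" if "\<bar>t\<bar> \<le> \<epsilon>" for t
  proof -
    have "norm (h t) < \<delta>1" using nh[OF that] eN \<delta>_def by linarith
    then have "norm (f (X + h t) - f X - f' (h t)) \<le> (\<bar>\<alpha>\<bar> / (2*N)) * norm (h t)"
      using h1[of "X + h t"] by simp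
    also have "\<dots> \<le> (\<bar>\<alpha>\<bar> / (2*N)) * (\<epsilon> * N)"
      using nh[OF that] Npos by (intro mult_left_mono) auto
    also have "\<dots> = \<bar>\<alpha>\<bar> * \<epsilon> / 2" using Npos by (simp add: field_simps)
    finally show ?thesis using fX f'h by simp
  qed
  have cont: "continuous_on {-\<epsilon>..\<epsilon>} (\<lambda>t. f (X + h t))"
    unfolding h_def
    by (rule continuous_on_compose2[OF fc]) (auto intro!: continuous_intros)
  have A1: "\<bar>f (X + h (-\<epsilon>)) + \<alpha> * \<epsilon>\<bar> \<le> \<bar>\<alpha>\<bar> * \<epsilon> / 2"
    using fapprox[of "-\<epsilon>"] epos by (simp add: mult.commute)
  have A2: "\<bar>f (X + h \<epsilon>) - \<alpha> * \<epsilon>\<bar> \<le> \<bar>\<alpha>\<bar> * \<epsilon> / 2"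
    using fapprox[of "\<epsilon>"] epos by (simp add: mult.commute)
  have "\<exists>t. -\<epsilon> \<le> t \<and> t \<le> \<epsilon> \<and> f (X + h t) = 0"
  proof (cases "\<alpha> > 0")
    case True
    have p: "\<alpha> * \<epsilon> > 0" "\<bar>\<alpha>\<bar> = \<alpha>" using True epos by auto
    have "f (X + h (-\<epsilon>)) \<le> 0" using A1[unfolded p(2) abs_le_iff] p by linarith
    moreover have "0 \<le> f (X + h \<epsilon>)" using A2[unfolded p(2) abs_le_iff] p by linarith
    ultimately show ?thesis using IVT'[of "\<lambda>t. f (X + h t)" "-\<epsilon>" 0 \<epsilon>] cont epos by auto
  next
    case False
    then have an: "\<alpha> < 0" using anz \<alpha>_def by simp
    have p: "\<alpha> * \<epsilon> < 0" "\<bar>\<alpha>\<bar> = - \<alpha>" using an epos by (auto simp: mult_neg_pos)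
    have "0 \<le> f (X + h (-\<epsilon>))" using A1[unfolded p(2) abs_le_iff] p by linarith
    moreover have "f (X + h \<epsilon>) \<le> 0" using A2[unfolded p(2) abs_le_iff] p by linarith
    ultimately show ?thesis using IVT2'[of "\<lambda>t. f (X + h t)" \<epsilon> 0 "-\<epsilon>"] cont epos by auto
  qed
  then obtain t where t: "\<bar>t\<bar> \<le> \<epsilon>" "f (X + h t) = 0" by (metis abs_le_iff minus_le_iff)
  have "X + h t \<in> K" using t fK by auto
  moreover have "X + h t \<in> U"
    using h3 nh[OF t(1)] eN \<delta>_def by (auto simp: dist_norm)
  ultimately have g0: "g (X + h t) = 0" using KU by auto
  have "X \<in> K" using fX fK by auto
  then have gX: "g X = 0" using KU XU by auto
  have "norm (h t) < \<delta>2" using nh[OF t(1)] eN \<delta>_def by linarith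
  then have "norm (g (X + h t) - g X - g' (h t)) \<le> (\<bar>\<beta>\<bar> / (2*N)) * norm (h t)"
    using h2[of "X + h t"] by simp
  also have "\<dots> \<le> (\<bar>\<beta>\<bar> / (2*N)) * (\<epsilon> * N)"
    using nh[OF t(1)] Npos by (intro mult_left_mono) auto
  also have "\<dots> = \<bar>\<beta>\<bar> * \<epsilon> / 2" using Npos by (simp add: field_simps)
  finally have "\<bar>\<epsilon> * \<beta>\<bar> \<le> \<bar>\<beta>\<bar> * \<epsilon> / 2" using g0 gX g'h by simp
  then show False using epos bnz by (simp add: abs_mult)
qed



lemma reflect_core:
  fixes u1 u2 d :: complex and s :: real
  assumes n1: "norm u1 = 1" and n2: "norm u2 = 1" and s: "s * s = 1"
    and w: "u1 + s *\<^sub>R u2 \<noteq> 0" and dw: "inner d (u1 + s *\<^sub>R u2) = 0"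
  shows "(inner d d) *\<^sub>R (u1 - s *\<^sub>R u2) = (2 * inner u1 d) *\<^sub>R d"
proof -
  define w1 where "w1 = Re u1 + s * Re u2"
  define w2 where "w2 = Im u1 + s * Im u2"
  define z1 where "z1 = Re u1 - s * Re u2"
  define z2 where "z2 = Im u1 - s * Im u2"
  have e1: "(Re u1)^2 + (Im u1)^2 = 1" using n1 unfolding norm_complex_def
    by (metis real_sqrt_eq_1_iff)
  have e2: "(Re u2)^2 + (Im u2)^2 = 1" using n2 unfolding norm_complex_def
    by (metis real_sqrt_eq_1_iff)
  have wz: "z1 * w1 + z2 * w2 = 0" unfolding z1_def w1_def z2_def w2_def
  proof -
    have "(Re u1 - s * Re u2) * (Re u1 + s * Re u2) + (Im u1 - s * Im u2) * (Im u1 + s * Im u2)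
      = ((Re u1)^2 + (Im u1)^2) - (s * s) * ((Re u2)^2 + (Im u2)^2)"
      by (simp add: algebra_simps power2_eq_square)
    then show "(Re u1 - s * Re u2) * (Re u1 + s * Re u2) + (Im u1 - s * Im u2) * (Im u1 + s * Im u2) = 0"
      using e1 e2 s by simp
  qed
  have dw': "Re d * w1 + Im d * w2 = 0" using dw unfolding w1_def w2_def inner_complex_def by simp
  have wnz: "w1 \<noteq> 0 \<or> w2 \<noteq> 0" using w unfolding w1_def w2_def complex_eq_iff by auto
  have cr1: "(Re d * z2 - Im d * z1) * w1 = 0"
  proof -
    have "(Re d * z2 - Im d * z1) * w1 = z2 * (Re d * w1 + Im d * w2) - Im d * (z1 * w1 + z2 * w2)"
      by (simp add: algebra_simps)
    thus ?thesis using wz dw' by simp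
  qed
  have cr2: "(Re d * z2 - Im d * z1) * w2 = 0"
  proof -
    have "(Re d * z2 - Im d * z1) * w2 = Re d * (z1 * w1 + z2 * w2) - z1 * (Re d * w1 + Im d * w2)"
      by (simp add: algebra_simps)
    thus ?thesis using wz dw' by simp
  qed
  have cr: "Re d * z2 = Im d * z1" using cr1 cr2 wnz by auto
  have ud: "2 * inner u1 d = z1 * Re d + z2 * Im d"
  proof -
    have "Re u1 * Re d + Im u1 * Im d = - s * (Re u2 * Re d + Im u2 * Im d)"
      using dw unfolding inner_complex_def by (simp add: algebra_simps)
    thus ?thesis unfolding z1_def z2_def inner_complex_def by (simp add: algebra_simps)
  qed
  have g1: "(Re d * Re d + Im d * Im d) * z1 = (z1 * Re d + z2 * Im d) * Re d"
  proof -
    have "(Re d * Re d + Im d * Im d) * z1 - (z1 * Re d + z2 * Im d) * Re d = Im d * (Im d * z1 - Re d * z2)"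
      by (simp add: algebra_simps)
    thus ?thesis using cr by simp
  qed
  have g2: "(Re d * Re d + Im d * Im d) * z2 = (z1 * Re d + z2 * Im d) * Im d"
  proof -
    have "(Re d * Re d + Im d * Im d) * z2 - (z1 * Re d + z2 * Im d) * Im d = Re d * (Re d * z2 - Im d * z1)"
      by (simp add: algebra_simps)
    thus ?thesis using cr by simp
  qed
  show ?thesis using g1 g2 unfolding complex_eq_iff ud
    by (simp add: inner_complex_def z1_def z2_def scaleR_conv_of_real)
qed



lemma foot:
  fixes X F1 F2 d Y :: complex and s t :: real
  assumes x1: "X \<noteq> F1" and x2: "X \<noteq> F2" and s: "s * s = 1"
    and w: "sgn (X - F1) + s *\<^sub>R sgn (X - F2) \<noteq> 0"
    and dw: "inner d (sgn (X - F1) + s *\<^sub>R sgn (X - F2)) = 0" and dnz: "d \<noteq> 0"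
    and Y: "Y = X + t *\<^sub>R d" and perp: "inner (F1 - Y) d = 0"
  shows "norm (Y - (F1 + F2) / 2) = \<bar>norm (X - F2) + s * norm (X - F1)\<bar> / 2"
proof -
  define u1 where "u1 = sgn (X - F1)"
  define u2 where "u2 = sgn (X - F2)"
  define r1 where "r1 = norm (X - F1)"
  define r2 where "r2 = norm (X - F2)"
  define D where "D = inner d d"
  have Dpos: "D > 0" using dnz unfolding D_def by simp
  have n1: "norm u1 = 1" using x1 unfolding u1_def by (simp add: norm_sgn)
  have n2: "norm u2 = 1" using x2 unfolding u2_def by (simp add: norm_sgn)
  have X1: "X - F1 = r1 *\<^sub>R u1" using x1 unfolding u1_def r1_def by (simp add: sgn_div_norm)
  have X2: "X - F2 = r2 *\<^sub>R u2" using x2 unfolding u2_def r2_def by (simp add: sgn_div_norm)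
  have core: "D *\<^sub>R (u1 - s *\<^sub>R u2) = (2 * inner u1 d) *\<^sub>R d"
    unfolding D_def using reflect_core[OF n1 n2 s] w dw unfolding u1_def u2_def by blast
  have tD: "t * D = - r1 * inner u1 d"
  proof -
    have "F1 - Y = - (X - F1) - t *\<^sub>R d" using Y by (simp add: algebra_simps)
    then have "F1 - Y = - (r1 *\<^sub>R u1) - t *\<^sub>R d" unfolding X1 .
    then have "inner (F1 - Y) d = - r1 * inner u1 d - t * D"
      unfolding D_def by (simp add: inner_diff_left)
    thus ?thesis using perp by simp
  qed
  have "D *\<^sub>R (2 *\<^sub>R Y - F1 - F2) = D *\<^sub>R ((r2 + s * r1) *\<^sub>R u2)"
  proof -
    have "2 *\<^sub>R Y - F1 - F2 = (X - F1) + (X - F2) + (2 * t) *\<^sub>R d"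
      using Y by (simp add: algebra_simps scaleR_2)
    then have "2 *\<^sub>R Y - F1 - F2 = r1 *\<^sub>R u1 + r2 *\<^sub>R u2 + (2 * t) *\<^sub>R d"
      unfolding X1 X2 .
    then have "D *\<^sub>R (2 *\<^sub>R Y - F1 - F2) = (D * r1) *\<^sub>R u1 + (D * r2) *\<^sub>R u2 + (2 * (t * D)) *\<^sub>R d"
      by (simp add: algebra_simps)
    also have "\<dots> = (D * r1) *\<^sub>R u1 + (D * r2) *\<^sub>R u2 - r1 *\<^sub>R ((2 * inner u1 d) *\<^sub>R d)"
      unfolding tD by (simp add: algebra_simps)
    also have "\<dots> = (D * r1) *\<^sub>R u1 + (D * r2) *\<^sub>R u2 - r1 *\<^sub>R (D *\<^sub>R (u1 - s *\<^sub>R u2))"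
      unfolding core ..
    also have "\<dots> = D *\<^sub>R ((r2 + s * r1) *\<^sub>R u2)"
      by (simp add: algebra_simps)
    finally show ?thesis .
  qed
  then have eq: "2 *\<^sub>R Y - F1 - F2 = (r2 + s * r1) *\<^sub>R u2" using Dpos
    by (metis less_irrefl scaleR_cancel_left)
  have "Y - (F1 + F2) / 2 = (1/2) *\<^sub>R (2 *\<^sub>R Y - F1 - F2)"
    by (simp add: scaleR_conv_of_real field_simps)
  also have "\<dots> = ((r2 + s * r1) / 2) *\<^sub>R u2" unfolding eq by simp
  finally have "norm (Y - (F1 + F2) / 2) = \<bar>(r2 + s * r1) / 2\<bar> * norm u2" by simp
  thus ?thesis using n2 unfolding r1_def r2_def by simp
qed

lemma perp_mid:
  fixes F A B :: complex
  assumes "norm (F - A) = norm (F - B)"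
  shows "inner (F - (A + B) / 2) (B - A) = 0"
proof -
  have "(norm (F - A))^2 = (norm (F - B))^2" using assms by simp
  then have "(Re F - Re A)^2 + (Im F - Im A)^2 = (Re F - Re B)^2 + (Im F - Im B)^2"
    by (simp add: cmod_power2)
  moreover have "2 * inner (F - (A + B) / 2) (B - A) = ((Re F - Re A)^2 + (Im F - Im A)^2) - ((Re F - Re B)^2 + (Im F - Im B)^2)"
    unfolding inner_complex_def by (simp add: field_simps power2_eq_square)
  ultimately show ?thesis by simp
qed

lemma perp_par:
  fixes D v :: complex
  assumes "D \<noteq> 0" "inner D v = 0"
  shows "\<exists>k. v = k *\<^sub>R (\<i> * D)"
proof -
  define k where "k = (Im v * Re D - Re v * Im D) / ((Re D)^2 + (Im D)^2)"
  have nz: "(Re D)^2 + (Im D)^2 \<noteq> 0" using assms(1)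
    by (simp add: complex_eq_iff add_nonneg_eq_0_iff)
  have o: "Re D * Re v + Im D * Im v = 0" using assms(2) unfolding inner_complex_def .
  have e1: "Re v * ((Re D)^2 + (Im D)^2) = - ((Im v * Re D - Re v * Im D) * Im D)"
  proof -
    have "Re v * ((Re D)^2 + (Im D)^2) + ((Im v * Re D - Re v * Im D) * Im D) = Re D * (Re D * Re v + Im D * Im v)"
      by (simp add: algebra_simps power2_eq_square)
    thus ?thesis using o by simp
  qed
  have e2: "Im v * ((Re D)^2 + (Im D)^2) = (Im v * Re D - Re v * Im D) * Re D"
  proof -
    have "Im v * ((Re D)^2 + (Im D)^2) - (Im v * Re D - Re v * Im D) * Re D = Im D * (Re D * Re v + Im D * Im v)"
      by (simp add: algebra_simps power2_eq_square)
    thus ?thesis using o by simp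
  qed
  have "v = k *\<^sub>R (\<i> * D)"
    using e1 e2 nz unfolding complex_eq_iff k_def by (simp add: field_simps)
  thus ?thesis by blast
qed

lemma circ_unique:
  fixes A B C P Q :: complex
  assumes nc: "\<not> collinear {A, B, C}"
    and p: "norm (P - A) = norm (P - B)" "norm (P - A) = norm (P - C)"
    and q: "norm (Q - A) = norm (Q - B)" "norm (Q - A) = norm (Q - C)"
  shows "P = Q"
proof (rule ccontr)
  assume ne: "P \<noteq> Q"
  define D where "D = P - Q"
  have Dnz: "D \<noteq> 0" using ne D_def by simp
  have "inner D (B - A) = inner (P - (A + B) / 2) (B - A) - inner (Q - (A + B) / 2) (B - A)"
    unfolding D_def by (simp add: inner_diff_left)
  then have ob: "inner D (B - A) = 0" using perp_mid[OF p(1)] perp_mid[OF q(1)] by simp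
  have "inner D (C - A) = inner (P - (A + C) / 2) (C - A) - inner (Q - (A + C) / 2) (C - A)"
    unfolding D_def by (simp add: inner_diff_left)
  then have oc: "inner D (C - A) = 0" using perp_mid[OF p(2)] perp_mid[OF q(2)] by simp
  obtain kb where kb: "B - A = kb *\<^sub>R (\<i> * D)" using perp_par[OF Dnz ob] by blast
  obtain kc where kc: "C - A = kc *\<^sub>R (\<i> * D)" using perp_par[OF Dnz oc] by blast
  have "collinear {A, B, C}" unfolding collinear_alt
  proof (rule exI[of _ A], rule exI[of _ "\<i> * D"], intro ballI)
    fix x assume "x \<in> {A, B, C}"
    then show "\<exists>c. x = A + c *\<^sub>R (\<i> * D)"
    proof (elim insertE)
      assume "x = A" then show ?thesis by (intro exI[of _ 0]) simp
    next
      assume "x = B" then show ?thesis using kb by (intro exI[of _ kb]) (simp add: algebra_simps)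
    next
      assume "x = C" then show ?thesis using kc by (intro exI[of _ kc]) (simp add: algebra_simps)
    next
      assume "x \<in> {}" then show ?thesis by simp
    qed
  qed
  with nc show False by simp
qed

lemma conic_data:
  assumes conic: "is_ellipse K F1 F2 a \<or> is_hyperbola K F1 F2 a" and XK: "X \<in> K"
  obtains s c where "s = 1 \<or> s = -1" "\<bar>c\<bar> = 2 * a" "dist X F1 + s * dist X F2 = c"
    "{P. dist P F1 + s * dist P F2 = c} \<subseteq> K" "dist F1 F2 \<noteq> 2 * a" "a > 0"
proof (cases "is_ellipse K F1 F2 a")
  case True
  then show ?thesis using XK that[of 1 "2 * a"] unfolding is_ellipse_def by auto
next
  case False
  then have h: "is_hyperbola K F1 F2 a" using conic by blast
  show ?thesis
  proof (rule that[of "-1" "dist X F1 - dist X F2"])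
    show "\<bar>dist X F1 - dist X F2\<bar> = 2 * a" using h XK unfolding is_hyperbola_def by auto
    show "{P. dist P F1 + - 1 * dist P F2 = dist X F1 - dist X F2} \<subseteq> K"
      using h XK unfolding is_hyperbola_def by auto
  qed (use h in \<open>auto simp: is_hyperbola_def\<close>)
qed

lemma tangent_foot:
  fixes Y F1 F2 :: complex
  assumes conic: "is_ellipse K F1 F2 a \<or> is_hyperbola K F1 F2 a"
    and tL: "tangent_line L K" and YL: "Y \<in> L"
    and perp: "\<forall>P\<in>L. \<forall>Q\<in>L. inner (F1 - Y) (P - Q) = 0"
  shows "norm (Y - (F1 + F2) / 2) = a"
proof -
  obtain X U g g' d where XL: "X \<in> L" and XK: "X \<in> K" and oU: "open U" and XU: "X \<in> U"
    and gd: "(g has_derivative g') (at X)" and g'nz: "g' \<noteq> (\<lambda>_. 0)"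
    and KU: "K \<inter> U = {P \<in> U. g P = (0::real)}" and dnz: "d \<noteq> 0" and g'd: "g' d = 0"
    and Ld: "L = {X + of_real t * d | t. True}"
    using tL unfolding tangent_line_def by blast
  obtain s c where s: "s = 1 \<or> s = -1" and c: "\<bar>c\<bar> = 2 * a"
    and Xc: "dist X F1 + s * dist X F2 = c" and sub: "{P. dist P F1 + s * dist P F2 = c} \<subseteq> K"
    and F12: "dist F1 F2 \<noteq> 2 * a" and apos: "a > 0"
    using conic_data[OF conic XK] by blast
  have ss: "s * s = 1" using s by auto
  have as: "\<bar>s\<bar> = 1" using s by auto
  have x1: "X \<noteq> F1"
  proof
    assume "X = F1"
    then have "s * dist F1 F2 = c" using Xc by simp
    then have "dist F1 F2 = \<bar>c\<bar>" using as by (metis abs_mult abs_of_nonneg mult_1 zero_le_dist)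
    thus False using F12 c by simp
  qed
  have x2: "X \<noteq> F2"
  proof
    assume "X = F2"
    then have "dist F1 F2 = c" using Xc by (simp add: dist_commute)
    then have "\<bar>c\<bar> = dist F1 F2" using zero_le_dist[of F1 F2] by (simp add: abs_of_nonneg)
    thus False using F12 c by simp
  qed
  define u1 where "u1 = sgn (X - F1)"
  define u2 where "u2 = sgn (X - F2)"
  define f where "f P = dist P F1 + s * dist P F2 - c" for P
  have d1: "((\<lambda>P. norm (P - F1)) has_derivative (\<lambda>h. inner h u1)) (at X)"
  proof -
    have "((\<lambda>P. P - F1) has_derivative (\<lambda>h. h)) (at X)"
      by (auto intro!: derivative_eq_intros)
    from has_derivative_compose[OF this has_derivative_norm[of "X - F1"]]
    show ?thesis using x1 unfolding u1_def by simp
  qed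
  have d2: "((\<lambda>P. norm (P - F2)) has_derivative (\<lambda>h. inner h u2)) (at X)"
  proof -
    have "((\<lambda>P. P - F2) has_derivative (\<lambda>h. h)) (at X)"
      by (auto intro!: derivative_eq_intros)
    from has_derivative_compose[OF this has_derivative_norm[of "X - F2"]]
    show ?thesis using x2 unfolding u2_def by simp
  qed
  have fd: "(f has_derivative (\<lambda>h. inner h u1 + s * inner h u2 - 0)) (at X)"
    unfolding f_def dist_norm
    by (intro has_derivative_diff has_derivative_add has_derivative_mult_right d1 d2 has_derivative_const)
  have fX: "f X = 0" using Xc unfolding f_def by simp
  have fc: "continuous_on UNIV f" unfolding f_def by (intro continuous_intros)
  have fK: "{P. f P = 0} \<subseteq> K" using sub unfolding f_def by auto
  have "inner d u1 + s * inner d u2 - 0 = 0"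
    using transversal[OF XU oU gd g'nz KU dnz g'd fd fX fc fK] .
  then have dw: "inner d (u1 + s *\<^sub>R u2) = 0" by (simp add: inner_add_right)
  have n2: "norm u2 = 1" using x2 unfolding u2_def by (simp add: norm_sgn)
  have X1: "X - F1 = dist X F1 *\<^sub>R u1" using x1 unfolding u1_def by (simp add: sgn_div_norm dist_norm)
  have X2: "X - F2 = dist X F2 *\<^sub>R u2" using x2 unfolding u2_def by (simp add: sgn_div_norm dist_norm)
  have sc1: "s * dist X F1 + dist X F2 = s * c"
  proof -
    have "s * c = s * dist X F1 + (s * s) * dist X F2" unfolding Xc[symmetric]
      by (simp add: distrib_left)
    thus ?thesis using ss by simp
  qed
  have w: "u1 + s *\<^sub>R u2 \<noteq> 0"
  proof
    assume "u1 + s *\<^sub>R u2 = 0"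
    then have u1e: "u1 = - (s *\<^sub>R u2)" by (simp add: add_eq_0_iff)
    have "F2 - F1 = (X - F1) - (X - F2)" by simp
    also have "\<dots> = - ((s * dist X F1 + dist X F2) *\<^sub>R u2)"
      unfolding X1 X2 u1e by (simp add: algebra_simps)
    also have "s * dist X F1 + dist X F2 = s * c"
      by (rule sc1)
    finally have "norm (F2 - F1) = \<bar>s * c\<bar>" using n2 by simp
    then have "dist F1 F2 = \<bar>c\<bar>" using as by (simp add: dist_norm norm_minus_commute abs_mult)
    thus False using F12 c by simp
  qed
  obtain t where Yt: "Y = X + of_real t * d" using YL Ld by blast
  have "X + of_real 1 * d \<in> L" "X + of_real 0 * d \<in> L" unfolding Ld by blast+
  then have "inner (F1 - Y) ((X + of_real 1 * d) - (X + of_real 0 * d)) = 0" using perp by blast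
  then have pd: "inner (F1 - Y) d = 0" by simp
  have "norm (Y - (F1 + F2) / 2) = \<bar>norm (X - F2) + s * norm (X - F1)\<bar> / 2"
    by (rule foot[where t=t, OF x1 x2 ss w[unfolded u1_def u2_def] dw[unfolded u1_def u2_def] dnz _ pd])
      (simp add: Yt scaleR_conv_of_real)
  also have "norm (X - F2) + s * norm (X - F1) = s * c"
    using sc1 by (simp add: dist_norm)
  finally show ?thesis using as c by (simp add: abs_mult)
qed

lemma side:
  fixes P Q F1 F2 :: complex
  assumes conic: "is_ellipse K F1 F2 a \<or> is_hyperbola K F1 F2 a"
    and tL: "tangent_line (line_through P Q) K" and eq: "norm (F1 - P) = norm (F1 - Q)"
  shows "norm ((P + Q) / 2 - (F1 + F2) / 2) = a"
proof (rule tangent_foot[OF conic tL])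
  show "(P + Q) / 2 \<in> line_through P Q" unfolding line_through_def
    by (rule CollectI, rule exI[of _ "1/2"]) (simp add: field_simps)
  show "\<forall>P'\<in>line_through P Q. \<forall>Q'\<in>line_through P Q. inner (F1 - (P + Q) / 2) (P' - Q') = 0"
  proof (intro ballI)
    fix P' Q' assume "P' \<in> line_through P Q" "Q' \<in> line_through P Q"
    then obtain t1 t2 where e: "P' = P + of_real t1 * (Q - P)" "Q' = P + of_real t2 * (Q - P)"
      unfolding line_through_def by blast
    have "P' - Q' = (t1 - t2) *\<^sub>R (Q - P)" unfolding e scaleR_conv_of_real of_real_diff
      by (simp add: left_diff_distrib)
    then show "inner (F1 - (P + Q) / 2) (P' - Q') = 0" using perp_mid[OF eq] by simp
  qed
qed

theorem corollary2p4:
  fixes A B C F1 F2 :: complex and K :: "complex set" and a R :: real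
  assumes nondeg: "\<not> collinear {A, B, C}"
    and circ: "dist F1 A = R" "dist F1 B = R" "dist F1 C = R"
    and conic: "is_ellipse K F1 F2 a \<or> is_hyperbola K F1 F2 a"
    and tAB: "tangent_line (line_through A B) K"
    and tBC: "tangent_line (line_through B C) K"
    and tCA: "tangent_line (line_through C A) K"
  shows "R = 2 * a"
proof -
  define M where "M = (F1 + F2) / 2"
  have hAB: "norm ((A + B) / 2 - M) = a"
    unfolding M_def by (rule side[OF conic tAB]) (use circ in \<open>simp add: dist_norm\<close>)
  have hBC: "norm ((B + C) / 2 - M) = a"
    unfolding M_def by (rule side[OF conic tBC]) (use circ in \<open>simp add: dist_norm\<close>)
  have hCA: "norm ((C + A) / 2 - M) = a"
    unfolding M_def by (rule side[OF conic tCA]) (use circ in \<open>simp add: dist_norm\<close>)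
  define Q where "Q = A + B + C - 2 * M"
  have n2: "norm (z / 2) = norm z / 2" for z :: complex by (simp add: norm_divide)
  have qC: "norm (Q - C) = 2 * a"
  proof -
    have "Q - C = 2 * ((A + B) / 2 - M)" unfolding Q_def by (simp add: field_simps)
    then have "norm (Q - C) = norm (2::complex) * a" using hAB by (simp only: norm_mult)
    then show ?thesis by simp
  qed
  have qA: "norm (Q - A) = 2 * a"
  proof -
    have "Q - A = 2 * ((B + C) / 2 - M)" unfolding Q_def by (simp add: field_simps)
    then have "norm (Q - A) = norm (2::complex) * a" using hBC by (simp only: norm_mult)
    then show ?thesis by simp
  qed
  have qB: "norm (Q - B) = 2 * a"
  proof -
    have "Q - B = 2 * ((C + A) / 2 - M)" unfolding Q_def by (simp add: field_simps)
    then have "norm (Q - B) = norm (2::complex) * a" using hCA by (simp only: norm_mult)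
    then show ?thesis by simp
  qed
  have "F1 = Q"
    by (rule circ_unique[OF nondeg]) (use circ qA qB qC in \<open>simp_all add: dist_norm\<close>)
  then show ?thesis using circ(1) qA by (simp add: dist_norm)
qed

end
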